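(* For any probability distributions $\mathbf{p},\mathbf{q}$ on $G_\Delta$ and any $\sigma>0$, $\mathrm{TV}(\tilde H^\sigma_{\mathbf{p}},\tilde H^\sigma_{\mathbf{q}})\le\frac{\sqrt{\mathrm{EMD}(\mathbf{p},\mathbf{q})}}{2\sigma}$.
   Context: $G_\Delta=\{(i/\Delta,j/\Delta):i,j\in\{0,\dots,\Delta-1\}\}$, $\tilde G_\Delta=\{(i/\Delta,j/\Delta):i,j\in\mathbb{Z}\}$. $\tilde H^\sigma_{\mathbf{p}}(a)=\sum_{a'\in G_\Delta}\frac1Z e^{-\|a-a'\|_2^2/(2\sigma^2)}\mathbf{p}(a')$ for $a\in\tilde G_\Delta$, $Z=\sum_{d\in\tilde G_\Delta}e^{-\|d\|_2^2/(2\sigma^2)}$. $\mathrm{TV}(P,Q)=\frac12\sum_a|P(a)-Q(a)|$. $\mathrm{EMD}(\mathbf{p},\mathbf{q})=\min_\gamma\sum_{x,y}\gamma(x,y)\|x-y\|_1$ over nonnegative couplings with marginals $\mathbf{p},\mathbf{q}$. *)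

theory Defs
  imports "HOL-Analysis.Analysis"
begin

text \<open>Points of the plane are elements of real \<times> real; the norm on this
product type is the Euclidean norm.\<close>

definition grid :: "nat \<Rightarrow> (real \<times> real) set" where
  "grid \<Delta> = {(real i / real \<Delta>, real j / real \<Delta>) | i j. i < \<Delta> \<and> j < \<Delta>}"

definition igrid :: "nat \<Rightarrow> (real \<times> real) set" where
  "igrid \<Delta> = {(real_of_int i / real \<Delta>, real_of_int j / real \<Delta>) | i j. True}"

definition is_distr :: "nat \<Rightarrow> (real \<times> real \<Rightarrow> real) \<Rightarrow> bool" where
  "is_distr \<Delta> p \<longleftrightarrow> (\<forall>a\<in>grid \<Delta>. p a \<ge> 0) \<and> (\<Sum>a\<in>grid \<Delta>. p a) = 1"

definition gauss_Z :: "nat \<Rightarrow> real \<Rightarrow> real" where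
  "gauss_Z \<Delta> \<sigma> = (\<Sum>\<^sub>\<infinity>d\<in>igrid \<Delta>. exp (- (norm d)\<^sup>2 / (2 * \<sigma>\<^sup>2)))"

definition Htilde :: "nat \<Rightarrow> real \<Rightarrow> (real \<times> real \<Rightarrow> real) \<Rightarrow> real \<times> real \<Rightarrow> real" where
  "Htilde \<Delta> \<sigma> p a =
     (\<Sum>a'\<in>grid \<Delta>. (1 / gauss_Z \<Delta> \<sigma>) * exp (- (norm (a - a'))\<^sup>2 / (2 * \<sigma>\<^sup>2)) * p a')"

definition TV :: "nat \<Rightarrow> (real \<times> real \<Rightarrow> real) \<Rightarrow> (real \<times> real \<Rightarrow> real) \<Rightarrow> real" where
  "TV \<Delta> P Q = (1/2) * (\<Sum>\<^sub>\<infinity>a\<in>igrid \<Delta>. \<bar>P a - Q a\<bar>)"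

definition l1dist :: "real \<times> real \<Rightarrow> real \<times> real \<Rightarrow> real" where
  "l1dist x y = \<bar>fst x - fst y\<bar> + \<bar>snd x - snd y\<bar>"

definition is_coupling ::
  "nat \<Rightarrow> (real \<times> real \<Rightarrow> real) \<Rightarrow> (real \<times> real \<Rightarrow> real)
     \<Rightarrow> (real \<times> real \<Rightarrow> real \<times> real \<Rightarrow> real) \<Rightarrow> bool" where
  "is_coupling \<Delta> p q \<gamma> \<longleftrightarrow>
     (\<forall>x\<in>grid \<Delta>. \<forall>y\<in>grid \<Delta>. \<gamma> x y \<ge> 0) \<and>
     (\<forall>x\<in>grid \<Delta>. (\<Sum>y\<in>grid \<Delta>. \<gamma> x y) = p x) \<and>
     (\<forall>y\<in>grid \<Delta>. (\<Sum>x\<in>grid \<Delta>. \<gamma> x y) = q y)"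

text \<open>The minimum over couplings (attained, as this is a feasible bounded LP)
is written as an infimum.\<close>
definition EMD :: "nat \<Rightarrow> (real \<times> real \<Rightarrow> real) \<Rightarrow> (real \<times> real \<Rightarrow> real) \<Rightarrow> real" where
  "EMD \<Delta> p q = Inf {(\<Sum>x\<in>grid \<Delta>. \<Sum>y\<in>grid \<Delta>. \<gamma> x y * l1dist x y) | \<gamma>. is_coupling \<Delta> p q \<gamma>}"

end

theory Submission
  imports Defs
begin


lemma gauss_int_nat:
  fixes c :: real assumes c: "c > 0"
  shows "(\<lambda>n::nat. exp (- c * (real n)\<^sup>2)) summable_on UNIV"
proof -
  have "summable (\<lambda>n. norm (exp (- c * (real n)\<^sup>2)))"
  proof (rule summable_comparison_test[where g = "\<lambda>n. exp (-c) ^ n"])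
    show "summable (\<lambda>n. exp (-c) ^ n)" using c by (intro summable_geometric) simp
    show "\<exists>N. \<forall>n\<ge>N. norm (norm (exp (- c * (real n)\<^sup>2))) \<le> exp (- c) ^ n"
    proof (intro exI allI impI)
      fix n :: nat
      have "real n \<le> (real n)\<^sup>2"
        by (cases n) (auto simp: power2_eq_square)
      hence "- c * (real n)\<^sup>2 \<le> real n * (-c)" using c
        by (simp add: mult_left_mono algebra_simps)
      thus "norm (norm (exp (- c * (real n)\<^sup>2))) \<le> exp (- c) ^ n"
        by (simp add: exp_of_nat_mult[symmetric])
    qed
  qed
  thus ?thesis by (rule norm_summable_imp_summable_on)
qed

lemma gauss_int:
  fixes c :: real assumes c: "c > 0"
  shows "(\<lambda>i::int. exp (- c * (of_int i)\<^sup>2)) summable_on UNIV"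
proof -
  let ?f = "\<lambda>i::int. exp (- c * (of_int i)\<^sup>2)"
  have "?f summable_on (int ` UNIV)"
    by (subst summable_on_reindex) (use gauss_int_nat[OF c] in \<open>auto simp: o_def\<close>)
  moreover have "?f summable_on ((\<lambda>n. - int n) ` UNIV)"
  proof -
    have "inj (\<lambda>n. - int n)" by (auto simp: inj_on_def)
    moreover have "(?f \<circ> (\<lambda>n. - int n)) summable_on UNIV"
      using gauss_int_nat[OF c] by (simp add: o_def)
    ultimately show ?thesis using summable_on_reindex by blast
  qed
  ultimately have "?f summable_on (int ` UNIV \<union> (\<lambda>n. - int n) ` UNIV)"
    by (rule summable_on_union)
  moreover have "int ` UNIV \<union> (\<lambda>n. - int n) ` UNIV = UNIV"
  proof -
    have "x \<in> int ` UNIV \<union> (\<lambda>n. - int n) ` UNIV" for x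
    proof (cases "x \<ge> 0")
      case True
      hence "x = int (nat x)" by simp
      thus ?thesis by blast
    next
      case False
      hence "x = - int (nat (-x))" by simp
      thus ?thesis by blast
    qed
    thus ?thesis by blast
  qed
  ultimately show ?thesis by simp
qed

lemma prod_summable:
  fixes f :: "'a \<Rightarrow> real"
  assumes f: "f summable_on UNIV" and nn: "\<And>x. f x \<ge> 0"
  shows "(\<lambda>(i,j). f i * f j) summable_on UNIV"
proof (rule nonneg_bdd_above_summable_on)
  show "\<And>x. x \<in> UNIV \<Longrightarrow> 0 \<le> (case x of (i, j) \<Rightarrow> f i * f j)" using nn by auto
  let ?S = "infsum f UNIV"
  show "bdd_above (sum (\<lambda>(i,j). f i * f j) ` {F. F \<subseteq> UNIV \<and> finite F})"
  proof (rule bdd_aboveI2)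
    fix F :: "('a \<times> 'a) set" assume "F \<in> {F. F \<subseteq> UNIV \<and> finite F}"
    hence F: "finite F" by auto
    have "sum (\<lambda>(i,j). f i * f j) F \<le> sum (\<lambda>(i,j). f i * f j) (fst ` F \<times> snd ` F)"
      using F nn by (intro sum_mono2) (auto intro!: finite_cartesian_product mult_nonneg_nonneg simp: rev_image_eqI)
    also have "\<dots> = sum f (fst ` F) * sum f (snd ` F)"
      by (simp add: sum_product sum.cartesian_product)
    also have "\<dots> \<le> ?S * ?S"
      using F nn f by (intro mult_mono finite_sum_le_infsum sum_nonneg infsum_nonneg) auto
    finally show "sum (\<lambda>(i,j). f i * f j) F \<le> ?S * ?S" .
  qed
qed

lemma igrid_eq: "igrid \<Delta> = (\<lambda>(i,j). (of_int i / real \<Delta>, of_int j / real \<Delta>)) ` UNIV"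
  unfolding igrid_def by auto

lemma normsq: "(norm (z :: real \<times> real))\<^sup>2 = (fst z)\<^sup>2 + (snd z)\<^sup>2"
  by (cases z) (simp add: norm_Pair)

lemma gauss_L:
  fixes c :: real assumes c: "c > 0" and D: "\<Delta> > 0"
  shows "(\<lambda>d. exp (- c * (norm d)\<^sup>2)) summable_on igrid \<Delta>"
proof -
  let ?phi = "\<lambda>(i::int,j::int). (of_int i / real \<Delta>, of_int j / real \<Delta>)"
  have inj: "inj ?phi" using D by (auto simp: inj_on_def)
  define c' where "c' = c / (real \<Delta>)\<^sup>2"
  have c': "c' > 0" using c D by (simp add: c'_def)
  have eq: "((\<lambda>d. exp (- c * (norm d)\<^sup>2)) \<circ> ?phi) = (\<lambda>(i,j). exp (- c' * (of_int i)\<^sup>2) * exp (- c' * (of_int j)\<^sup>2))"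
    by (auto simp: fun_eq_iff normsq c'_def power_divide field_simps simp flip: exp_add)
  have "(\<lambda>(i,j). exp (- c' * (of_int i)\<^sup>2) * exp (- c' * (of_int j)\<^sup>2)) summable_on (UNIV :: (int \<times> int) set)"
    using prod_summable[OF gauss_int[OF c']] by simp
  thus ?thesis unfolding igrid_eq using inj by (subst summable_on_reindex) (simp_all only: eq)
qed



definition gs :: "real \<Rightarrow> real \<times> real \<Rightarrow> real" where
  "gs \<sigma> d = exp (- (norm d)\<^sup>2 / (2 * \<sigma>\<^sup>2))"

lemma gs_pos: "gs \<sigma> d > 0" by (simp add: gs_def)

lemma gs_neg: "gs \<sigma> (- d) = gs \<sigma> d" by (simp add: gs_def)

lemma igrid_mem: "a \<in> igrid \<Delta> \<longleftrightarrow> (\<exists>i j. a = (of_int i / real \<Delta>, of_int j / real \<Delta>))"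
  unfolding igrid_def by auto

lemma igrid_diff: "a \<in> igrid \<Delta> \<Longrightarrow> x \<in> igrid \<Delta> \<Longrightarrow> a - x \<in> igrid \<Delta>"
proof -
  assume "a \<in> igrid \<Delta>" "x \<in> igrid \<Delta>"
  then obtain i j i' j' where "a = (of_int i / real \<Delta>, of_int j / real \<Delta>)"
    "x = (of_int i' / real \<Delta>, of_int j' / real \<Delta>)" unfolding igrid_mem by blast
  hence "a - x = (of_int (i - i') / real \<Delta>, of_int (j - j') / real \<Delta>)"
    by (simp add: diff_divide_distrib)
  thus ?thesis unfolding igrid_mem by blast
qed

lemma igrid_add: "a \<in> igrid \<Delta> \<Longrightarrow> x \<in> igrid \<Delta> \<Longrightarrow> a + x \<in> igrid \<Delta>"
proof -
  assume "a \<in> igrid \<Delta>" "x \<in> igrid \<Delta>"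
  then obtain i j i' j' where "a = (of_int i / real \<Delta>, of_int j / real \<Delta>)"
    "x = (of_int i' / real \<Delta>, of_int j' / real \<Delta>)" unfolding igrid_mem by blast
  hence "a + x = (of_int (i + i') / real \<Delta>, of_int (j + j') / real \<Delta>)"
    by (simp add: add_divide_distrib)
  thus ?thesis unfolding igrid_mem by blast
qed

lemma igrid_uminus: "a \<in> igrid \<Delta> \<Longrightarrow> - a \<in> igrid \<Delta>"
proof -
  assume "a \<in> igrid \<Delta>"
  then obtain i j where "a = (of_int i / real \<Delta>, of_int j / real \<Delta>)"
    unfolding igrid_mem by blast
  hence "- a = (of_int (- i) / real \<Delta>, of_int (- j) / real \<Delta>)"
    by simp
  thus ?thesis unfolding igrid_mem by blast
qed

lemma grid_sub: "grid \<Delta> \<subseteq> igrid \<Delta>"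
proof
  fix a assume "a \<in> grid \<Delta>"
  then obtain i j :: nat where "a = (real i / real \<Delta>, real j / real \<Delta>)"
    unfolding grid_def by blast
  hence "a = (of_int (int i) / real \<Delta>, of_int (int j) / real \<Delta>)" by simp
  thus "a \<in> igrid \<Delta>" unfolding igrid_mem by blast
qed

lemma bij_trans: "x \<in> igrid \<Delta> \<Longrightarrow> bij_betw (\<lambda>a. a - x) (igrid \<Delta>) (igrid \<Delta>)"
  by (rule bij_betwI[where g = "\<lambda>a. a + x"]) (auto intro: igrid_diff igrid_add)

lemma bij_neg: "bij_betw uminus (igrid \<Delta>) (igrid \<Delta>)"
  by (rule bij_betwI[where g = "uminus"]) (auto intro: igrid_uminus)

lemma summable_trans:
  assumes "x \<in> igrid \<Delta>" "f summable_on igrid \<Delta>"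
  shows "(\<lambda>a. f (a - x)) summable_on igrid \<Delta>"
  using summable_on_reindex_bij_betw[OF bij_trans[OF assms(1)], of f] assms(2) by simp

lemma infsum_trans:
  assumes "x \<in> igrid \<Delta>"
  shows "infsum (\<lambda>a. f (a - x)) (igrid \<Delta>) = infsum f (igrid \<Delta>)"
  using infsum_reindex_bij_betw[OF bij_trans[OF assms(1)], of f] by simp

lemma gs_alt: "gs \<sigma> d = exp (- (1 / (2 * \<sigma>\<^sup>2)) * (norm d)\<^sup>2)"
  by (simp add: gs_def)

lemma gs_summable:
  assumes "\<sigma> > 0" "\<Delta> > 0"
  shows "gs \<sigma> summable_on igrid \<Delta>"
  unfolding gs_alt[abs_def] using assms by (intro gauss_L) auto

lemma sqrt_exp_bound:
  fixes s c :: real assumes s: "s \<ge> 0" and c: "c > 0"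
  shows "sqrt s * exp (- c * s) \<le> (1 + 2 / c) * exp (- (c / 2) * s)"
proof -
  have e: "exp (- c * s) = exp (- (c/2) * s) * exp (- (c/2) * s)"
    by (simp flip: exp_add)
  have s1: "sqrt s \<le> 1 + s"
    using s by (intro real_le_lsqrt) (auto simp: power2_eq_square algebra_simps)
  have "c/2 * s \<le> exp (c/2 * s)" using exp_ge_add_one_self[of "c / 2 * s"] by linarith
  hence "s \<le> 2 / c * exp ((c/2) * s)" using c by (simp add: field_simps)
  hence "s * exp (- (c/2) * s) \<le> 2 / c * exp ((c/2) * s) * exp (- (c/2) * s)"
    by (rule mult_right_mono) auto
  also have "\<dots> = 2 / c" by (simp flip: exp_add)
  finally have s2: "s * exp (- (c/2) * s) \<le> 2 / c" .
  have ex1: "exp (- (c/2) * s) \<le> 1" using c s by simp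
  have "sqrt s * exp (- c * s) \<le> (1 + s) * exp (- c * s)"
    using s1 by (simp add: mult_right_mono)
  also have "\<dots> = exp (- (c/2) * s) * (exp (- (c/2) * s) + s * exp (- (c/2) * s))"
    unfolding e by (simp add: algebra_simps)
  also have "\<dots> \<le> exp (- (c/2) * s) * (1 + 2 / c)"
    by (intro mult_left_mono add_mono ex1 s2) auto
  finally show ?thesis by (simp add: mult.commute)
qed

lemma gs_coord_summable:
  assumes "\<sigma> > 0" "\<Delta> > 0" and h: "\<And>d. \<bar>h d\<bar> \<le> norm d"
  shows "(\<lambda>d. gs \<sigma> d * h d) summable_on igrid \<Delta>"
proof (rule abs_summable_summable)
  define c where "c = 1 / (2 * \<sigma>\<^sup>2)"
  have c: "c > 0" using assms by (simp add: c_def)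
  have "(\<lambda>d. (1 + 2 / c) * exp (- (c/2) * (norm d)\<^sup>2)) summable_on igrid \<Delta>"
    using c assms by (intro summable_on_cmult_right gauss_L) auto
  thus "(\<lambda>d. norm (gs \<sigma> d * h d)) summable_on igrid \<Delta>"
  proof (rule summable_on_comparison_test)
    fix d
    have "norm (gs \<sigma> d * h d) = \<bar>h d\<bar> * exp (- c * (norm d)\<^sup>2)"
      by (simp add: gs_alt c_def abs_mult)
    also have "\<dots> \<le> sqrt ((norm d)\<^sup>2) * exp (- c * (norm d)\<^sup>2)"
      using h[of d] by (intro mult_right_mono) auto
    also have "\<dots> \<le> (1 + 2 / c) * exp (- (c/2) * (norm d)\<^sup>2)"
      using c by (intro sqrt_exp_bound) auto
    finally show "norm (gs \<sigma> d * h d) \<le> (1 + 2 / c) * exp (- (c/2) * (norm d)\<^sup>2)" .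
  qed auto
qed

lemma gs_coord_zero:
  assumes h: "\<And>d. h (- d) = - h d"
  shows "infsum (\<lambda>d. gs \<sigma> d * h d) (igrid \<Delta>) = 0"
proof -
  have "infsum (\<lambda>d. gs \<sigma> (-d) * h (-d)) (igrid \<Delta>) = infsum (\<lambda>d. gs \<sigma> d * h d) (igrid \<Delta>)"
    using infsum_reindex_bij_betw[OF bij_neg, of "\<lambda>d. gs \<sigma> d * h d"] by simp
  moreover have "infsum (\<lambda>d. gs \<sigma> (-d) * h (-d)) (igrid \<Delta>) = - infsum (\<lambda>d. gs \<sigma> d * h d) (igrid \<Delta>)"
    by (simp add: gs_neg h infsum_uminus)
  ultimately show ?thesis by simp
qed

lemma abs_fst_le: "\<bar>fst (d::real\<times>real)\<bar> \<le> norm d"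
  by (cases d) (simp add: norm_Pair real_le_rsqrt)
lemma abs_snd_le: "\<bar>snd (d::real\<times>real)\<bar> \<le> norm d"
  by (cases d) (simp add: norm_Pair real_le_rsqrt)



lemma log_ineq:
  fixes u :: real assumes u: "u > 0"
  shows "(u-1)*(5*u+1)/(2*u*(u+2)) \<le> ln u"
proof -
  define F where "F = (\<lambda>u::real. ln u - (u-1)*(5*u+1)/(2*u*(u+2)))"
  define F' where "F' = (\<lambda>x::real. (x-1)^3/(x^2*(x+2)^2))"
  have d: "(F has_real_derivative F' x) (at x)" if x: "x > 0" for x
  proof -
    have "(F has_real_derivative (1/x - (((5*x+1) + (x-1)*5)*(2*x*(x+2)) - (x-1)*(5*x+1)*(2*(x+2)+2*x))/(2*x*(x+2))^2)) (at x)"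
      unfolding F_def using x
      by (auto intro!: derivative_eq_intros simp: power2_eq_square)
    moreover have "(1/x - (((5*x+1) + (x-1)*5)*(2*x*(x+2)) - (x-1)*(5*x+1)*(2*(x+2)+2*x))/(2*x*(x+2))^2) = F' x"
    proof -
      have N: "((5*x+1) + (x-1)*5)*(2*x*(x+2)) - (x-1)*(5*x+1)*(2*(x+2)+2*x) = 28*x^2+4*x+4"
        by algebra
      have D: "(2*x*(x+2))^2 = 4*(x^2*(x+2)^2)" by algebra
      have nz: "x^2*(x+2)^2 \<noteq> 0" using x by simp
      have "1/x = (4*x*(x+2)^2) / (4*(x^2*(x+2)^2))" using x by (simp add: power2_eq_square)
      hence "1/x - (28*x^2+4*x+4)/(4*(x^2*(x+2)^2)) = (4*x*(x+2)^2 - (28*x^2+4*x+4))/(4*(x^2*(x+2)^2))"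
        by (simp add: diff_divide_distrib)
      also have "4*x*(x+2)^2 - (28*x^2+4*x+4) = 4*(x-1)^3" by algebra
      finally show ?thesis unfolding N D F'_def using nz by simp
    qed
    ultimately show ?thesis by simp
  qed
  have F1: "F 1 = 0" by (simp add: F_def)
  have "F u \<ge> 0"
  proof (cases u "1::real" rule: linorder_cases)
    case less
    obtain z where z: "z > u" "z < 1" "F 1 - F u = (1 - u) * F' z"
      using MVT2[OF less, of F F'] d u by auto
    have "(1-z)^3 \<ge> 0" using z by simp
    moreover have "(z-1)^3 = -((1-z)^3)" by (simp add: power3_eq_cube algebra_simps)
    ultimately have "(z-1)^3 \<le> 0" by simp
    hence "F' z \<le> 0" unfolding F'_def
      by (intro divide_nonpos_nonneg) auto
    hence "(1 - u) * F' z \<le> 0" using less by (simp add: mult_nonneg_nonpos)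
    thus ?thesis using z F1 by simp
  next
    case greater
    obtain z where z: "z > 1" "z < u" "F u - F 1 = (u - 1) * F' z"
      using MVT2[OF greater, of F F'] d by auto
    have "F' z \<ge> 0" using z unfolding F'_def by simp
    hence "(u - 1) * F' z \<ge> 0" using greater by simp
    thus ?thesis using z F1 by simp
  qed (simp add: F1)
  thus ?thesis by (simp add: F_def)
qed

lemma pointwise:
  fixes P Q t :: real assumes P: "P > 0" and Q: "Q > 0" and t: "t > 0"
  shows "\<bar>Q - P\<bar> \<le> (t * (2*Q + 4*P)/3 + (Q * ln (Q/P) - Q + P)/t)/2"
proof -
  define u where "u = Q/P"
  have u: "u > 0" using P Q by (simp add: u_def)
  define phi where "phi = u * ln u - u + 1"
  define A where "A = (2*u+4)/3"
  have "u * ((u-1)*(5*u+1)/(2*u*(u+2))) \<le> u * ln u"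
    using log_ineq[OF u] u by (intro mult_left_mono) auto
  moreover have "u * ((u-1)*(5*u+1)/(2*u*(u+2))) = (u-1)*(5*u+1)/(2*(u+2))"
  proof -
    have "u * ((u-1)*(5*u+1)/(2*u*(u+2))) = (u*((u-1)*(5*u+1)))/(u*(2*(u+2)))"
      by (simp add: ac_simps)
    also have "\<dots> = (u-1)*(5*u+1)/(2*(u+2))" using u by (intro mult_divide_mult_cancel_left) auto
    finally show ?thesis .
  qed
  ultimately have "(u-1)*(5*u+1)/(2*(u+2)) \<le> u * ln u" by simp
  hence ph: "3*(u-1)^2/(2*(u+2)) \<le> phi"
  proof -
    have "(u - 1) = (u-1)*(2*(u+2))/(2*(u+2))" using u by simp
    hence "(u-1)*(5*u+1)/(2*(u+2)) - (u - 1) = ((u-1)*(5*u+1) - (u-1)*(2*(u+2)))/(2*(u+2))"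
      by (metis diff_divide_distrib)
    also have "(u-1)*(5*u+1) - (u-1)*(2*(u+2)) = 3*(u-1)^2" by algebra
    finally have "3*(u-1)^2/(2*(u+2)) = (u-1)*(5*u+1)/(2*(u+2)) - (u - 1)" by simp
    thus ?thesis unfolding phi_def using \<open>(u-1)*(5*u+1)/(2*(u+2)) \<le> u * ln u\<close> by linarith
  qed
  have ph0: "phi \<ge> 0" using ph u by (smt (verit) divide_nonneg_pos zero_le_power2)
  have A0: "A > 0" using u by (simp add: A_def)
  have A3: "A * 3 = 2*(u+2)" by (simp add: A_def)
  have "A * (3*(u-1)^2/(2*(u+2))) = ((A*3)*(u-1)^2)/(2*(u+2))" by simp
  also have "\<dots> = (u-1)^2" unfolding A3 using u by simp
  finally have "(u-1)^2 = A * (3*(u-1)^2/(2*(u+2)))" by simp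
  also have "\<dots> \<le> A * phi" using A0 by (intro mult_left_mono ph) auto
  also have "\<dots> \<le> ((t*A + phi/t)/2)^2"
  proof -
    have "0 \<le> (t*A - phi/t)^2" by simp
    thus ?thesis using t by (simp add: power2_eq_square field_simps)
  qed
  finally have sq: "\<bar>u - 1\<bar>^2 \<le> ((t*A + phi/t)/2)^2" by simp
  have "0 \<le> (t*A + phi/t)/2" using t A0 ph0 by simp
  with sq have "\<bar>u - 1\<bar> \<le> (t*A + phi/t)/2" by (rule power2_le_imp_le)
  hence "P * \<bar>u - 1\<bar> \<le> P * ((t*A + phi/t)/2)" using P by (simp add: mult_left_mono)
  moreover have "P * \<bar>u - 1\<bar> = \<bar>Q - P\<bar>"
  proof -
    have "P * (u - 1) = Q - P" using P by (simp add: u_def right_diff_distrib)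
    thus ?thesis using P by (metis abs_mult abs_of_pos)
  qed
  moreover have "P * ((t*A + phi/t)/2) = (t * (2*Q + 4*P)/3 + (Q * ln (Q/P) - Q + P)/t)/2"
  proof -
    have PA: "P * A = (2*Q + 4*P)/3" using P by (simp add: A_def u_def distrib_left)
    have Pphi: "P * phi = Q * ln (Q/P) - Q + P" using P
      by (simp add: phi_def u_def distrib_left right_diff_distrib)
    have "P * ((t*A + phi/t)/2) = (t * (P*A) + (P*phi)/t)/2" by (simp add: algebra_simps)
    thus ?thesis unfolding PA Pphi by simp
  qed
  ultimately show ?thesis by simp
qed



lemma ln_ratio:
  "ln (gs \<sigma> (a - y) / gs \<sigma> (a - x)) =
     (2*(fst (a-y) * fst (y-x) + snd (a-y) * snd (y-x)) + (norm (x-y))\<^sup>2) / (2*\<sigma>\<^sup>2)"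
proof -
  have "gs \<sigma> (a - y) / gs \<sigma> (a - x) = exp ((norm (a-x))\<^sup>2 / (2*\<sigma>\<^sup>2) - (norm (a-y))\<^sup>2 / (2*\<sigma>\<^sup>2))"
    by (simp add: gs_def exp_diff[symmetric])
  hence "ln (gs \<sigma> (a - y) / gs \<sigma> (a - x)) = ((norm (a-x))\<^sup>2 - (norm (a-y))\<^sup>2) / (2*\<sigma>\<^sup>2)"
    by (simp add: diff_divide_distrib)
  also have "(norm (a-x))\<^sup>2 - (norm (a-y))\<^sup>2 = 2*(fst (a-y) * fst (y-x) + snd (a-y) * snd (y-x)) + (norm (x-y))\<^sup>2"
    unfolding normsq by (simp add: power2_eq_square algebra_simps)
  finally show ?thesis .
qed

lemma pair_summable:
  assumes s: "\<sigma> > 0" and D: "\<Delta> > 0" and x: "x \<in> igrid \<Delta>" and y: "y \<in> igrid \<Delta>"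
  shows "(\<lambda>a. \<bar>gs \<sigma> (a - x) - gs \<sigma> (a - y)\<bar>) summable_on igrid \<Delta>"
proof (rule summable_on_comparison_test)
  show "(\<lambda>a. gs \<sigma> (a - x) + gs \<sigma> (a - y)) summable_on igrid \<Delta>"
    using summable_trans[OF x gs_summable[OF s D]] summable_trans[OF y gs_summable[OF s D]]
    by (rule summable_on_add)
  show "\<bar>gs \<sigma> (a - x) - gs \<sigma> (a - y)\<bar> \<le> gs \<sigma> (a - x) + gs \<sigma> (a - y)" for a
    using gs_pos[of \<sigma> "a-x"] gs_pos[of \<sigma> "a-y"] by linarith
qed auto

lemma R_alg:
  fixes t w2 P Q f1 f2 v1 v2 r2 :: real
  assumes "t \<noteq> 0" "w2 \<noteq> 0"
  shows "(t * (2 * Q + 4 * P) / 3 + (Q * ((2 * (f1 * v1 + f2 * v2) + r2) / (2 * w2)) - Q + P) / t) / 2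
    = (2 * t / 3 + 1 / (2 * t)) * P + (t / 3 + (r2 / (2 * w2) - 1) / (2 * t)) * Q
      + v1 / (2 * w2 * t) * (Q * f1) + v2 / (2 * w2 * t) * (Q * f2)"
  using assms by (simp add: field_simps)

lemma pair_bound:
  assumes s: "\<sigma> > 0" and D: "\<Delta> > 0" and x: "x \<in> igrid \<Delta>" and y: "y \<in> igrid \<Delta>"
  shows "infsum (\<lambda>a. \<bar>gs \<sigma> (a - x) - gs \<sigma> (a - y)\<bar>) (igrid \<Delta>)
           \<le> infsum (gs \<sigma>) (igrid \<Delta>) * norm (x - y) / \<sigma>"
proof (cases "x = y")
  case True thus ?thesis by simp
next
  case False
  define r where "r = norm (x - y)"
  have r: "r > 0" using False by (simp add: r_def)
  define t where "t = r / (2*\<sigma>)"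
  have t: "t > 0" using r s by (simp add: t_def)
  define Z where "Z = infsum (gs \<sigma>) (igrid \<Delta>)"
  define v1 where "v1 = fst (y - x)"
  define v2 where "v2 = snd (y - x)"
  define al where "al = 2*t/3 + 1/(2*t)"
  define be where "be = t/3 + (r\<^sup>2/(2*\<sigma>\<^sup>2) - 1)/(2*t)"
  define g1 where "g1 = v1 / (2*\<sigma>\<^sup>2*t)"
  define g2 where "g2 = v2 / (2*\<sigma>\<^sup>2*t)"
  let ?P = "\<lambda>a. gs \<sigma> (a - x)"
  let ?Q = "\<lambda>a. gs \<sigma> (a - y)"
  let ?Q1 = "\<lambda>a. gs \<sigma> (a - y) * fst (a - y)"
  let ?Q2 = "\<lambda>a. gs \<sigma> (a - y) * snd (a - y)"
  define R where "R = (\<lambda>a. al * ?P a + be * ?Q a + g1 * ?Q1 a + g2 * ?Q2 a)"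
  have sP: "?P summable_on igrid \<Delta>" by (rule summable_trans[OF x gs_summable[OF s D]])
  have sQ: "?Q summable_on igrid \<Delta>" by (rule summable_trans[OF y gs_summable[OF s D]])
  have sQ1: "?Q1 summable_on igrid \<Delta>"
    using summable_trans[OF y gs_coord_summable[OF s D, of fst]] abs_fst_le by blast
  have sQ2: "?Q2 summable_on igrid \<Delta>"
    using summable_trans[OF y gs_coord_summable[OF s D, of snd]] abs_snd_le by blast
  have iP: "infsum ?P (igrid \<Delta>) = Z" unfolding Z_def by (rule infsum_trans[OF x])
  have iQ: "infsum ?Q (igrid \<Delta>) = Z" unfolding Z_def by (rule infsum_trans[OF y])
  have iQ1: "infsum ?Q1 (igrid \<Delta>) = 0"
    using infsum_trans[OF y, of "\<lambda>d. gs \<sigma> d * fst d"] gs_coord_zero[of fst \<sigma> \<Delta>] by simp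
  have iQ2: "infsum ?Q2 (igrid \<Delta>) = 0"
    using infsum_trans[OF y, of "\<lambda>d. gs \<sigma> d * snd d"] gs_coord_zero[of snd \<sigma> \<Delta>] by simp
  have sR: "R summable_on igrid \<Delta>" unfolding R_def
    by (intro summable_on_add summable_on_cmult_right sP sQ sQ1 sQ2)
  have iR: "infsum R (igrid \<Delta>) = al * Z + be * Z"
  proof -
    have hP: "(?P has_sum Z) (igrid \<Delta>)" using sP iP by (simp add: has_sum_iff)
    have hQ: "(?Q has_sum Z) (igrid \<Delta>)" using sQ iQ by (simp add: has_sum_iff)
    have hQ1: "(?Q1 has_sum 0) (igrid \<Delta>)" using sQ1 iQ1 has_sum_iff by blast
    have hQ2: "(?Q2 has_sum 0) (igrid \<Delta>)" using sQ2 iQ2 has_sum_iff by blast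
    have "(R has_sum (al * Z + be * Z + g1 * 0 + g2 * 0)) (igrid \<Delta>)"
      unfolding R_def
      by (intro has_sum_add has_sum_cmult_right hP hQ hQ1 hQ2)
    thus ?thesis using has_sum_iff by force
  qed
  have pw: "\<bar>?P a - ?Q a\<bar> \<le> R a" for a
  proof -
    have "\<bar>?Q a - ?P a\<bar> \<le> (t * (2 * ?Q a + 4 * ?P a)/3 + (?Q a * ln (?Q a / ?P a) - ?Q a + ?P a)/t)/2"
      by (rule pointwise[OF gs_pos gs_pos t])
    also have "\<dots> = R a"
      unfolding ln_ratio v1_def[symmetric] v2_def[symmetric] r_def[symmetric] R_def al_def be_def g1_def g2_def
      by (rule R_alg) (use t s in auto)
    finally show ?thesis by (simp add: abs_minus_commute)
  qed
  have "infsum (\<lambda>a. \<bar>?P a - ?Q a\<bar>) (igrid \<Delta>) \<le> infsum R (igrid \<Delta>)"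
    by (rule infsum_mono[OF pair_summable[OF s D x y] sR pw])
  also have "\<dots> = Z * r / \<sigma>"
    unfolding iR al_def be_def t_def using r s by (simp add: field_simps power2_eq_square)
  finally show ?thesis unfolding Z_def r_def .
qed



lemma fin_sum_has_sum:
  fixes f :: "'i \<Rightarrow> 'a \<Rightarrow> real"
  assumes "finite I" "\<And>i. i \<in> I \<Longrightarrow> (f i has_sum s i) A"
  shows "((\<lambda>a. \<Sum>i\<in>I. f i a) has_sum (\<Sum>i\<in>I. s i)) A"
  using assms
proof (induction I rule: finite_induct)
  case empty thus ?case by simp
next
  case (insert j I)
  have "((\<lambda>a. f j a + (\<Sum>i\<in>I. f i a)) has_sum (s j + (\<Sum>i\<in>I. s i))) A"
    using insert by (intro has_sum_add) auto
  thus ?case using insert by simp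
qed

lemma grid_fin: "finite (grid \<Delta>)"
proof -
  have "grid \<Delta> = (\<lambda>(i,j). (real i / real \<Delta>, real j / real \<Delta>)) ` ({..<\<Delta>} \<times> {..<\<Delta>})"
    unfolding grid_def by auto
  thus ?thesis by simp
qed

lemma grid_coord:
  assumes "z \<in> grid \<Delta>"
  shows "0 \<le> fst z \<and> fst z < 1 \<and> 0 \<le> snd z \<and> snd z < 1"
proof -
  obtain i j where z: "z = (real i / real \<Delta>, real j / real \<Delta>)" "i < \<Delta>" "j < \<Delta>"
    using assms unfolding grid_def by blast
  thus ?thesis by (auto simp: divide_less_eq)
qed

lemma sq_le_l1:
  assumes "x \<in> grid \<Delta>" "y \<in> grid \<Delta>"
  shows "(norm (x - y))\<^sup>2 \<le> l1dist x y"
proof -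
  have a: "\<bar>fst x - fst y\<bar> \<le> 1" "\<bar>snd x - snd y\<bar> \<le> 1"
    using grid_coord[OF assms(1)] grid_coord[OF assms(2)] by auto
  have "(fst x - fst y)\<^sup>2 \<le> \<bar>fst x - fst y\<bar>"
    using a(1) by (metis abs_ge_zero abs_mult_self_eq mult_left_le power2_eq_square)
  moreover have "(snd x - snd y)\<^sup>2 \<le> \<bar>snd x - snd y\<bar>"
    using a(2) by (metis abs_ge_zero abs_mult_self_eq mult_left_le power2_eq_square)
  ultimately show ?thesis unfolding normsq l1dist_def by simp
qed

lemma zero_igrid: "0 \<in> igrid \<Delta>"
  unfolding igrid_mem by (rule exI[of _ 0], rule exI[of _ 0]) (simp add: zero_prod_def)

lemma Z_ge1:
  assumes s: "\<sigma> > 0" and D: "\<Delta> > 0"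
  shows "infsum (gs \<sigma>) (igrid \<Delta>) \<ge> 1"
proof -
  have "sum (gs \<sigma>) {0} \<le> infsum (gs \<sigma>) (igrid \<Delta>)"
    using gs_summable[OF s D] zero_igrid gs_pos by (intro finite_sum_le_infsum) (auto intro: less_imp_le)
  thus ?thesis by (simp add: gs_def)
qed

lemma coupling_bound:
  assumes D: "\<Delta> > 0" and s: "\<sigma> > 0"
    and gam: "is_coupling \<Delta> p q \<gamma>" and pd: "is_distr \<Delta> p"
  shows "(2 * \<sigma> * TV \<Delta> (Htilde \<Delta> \<sigma> p) (Htilde \<Delta> \<sigma> q))\<^sup>2
           \<le> (\<Sum>x\<in>grid \<Delta>. \<Sum>y\<in>grid \<Delta>. \<gamma> x y * l1dist x y)"
proof -
  define G where "G = grid \<Delta>"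
  define L where "L = igrid \<Delta>"
  define Z where "Z = infsum (gs \<sigma>) L"
  have GL: "G \<subseteq> L" unfolding G_def L_def by (rule grid_sub)
  have finG: "finite G" unfolding G_def by (rule grid_fin)
  have Z1: "Z \<ge> 1" unfolding Z_def L_def by (rule Z_ge1[OF s D])
  have gZ: "gauss_Z \<Delta> \<sigma> = Z" unfolding Z_def L_def gauss_Z_def gs_def ..
  have g0: "\<And>x y. x \<in> G \<Longrightarrow> y \<in> G \<Longrightarrow> \<gamma> x y \<ge> 0"
   and gp: "\<And>x. x \<in> G \<Longrightarrow> (\<Sum>y\<in>G. \<gamma> x y) = p x"
   and gq: "\<And>y. y \<in> G \<Longrightarrow> (\<Sum>x\<in>G. \<gamma> x y) = q y"
    using gam unfolding is_coupling_def G_def by auto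
  define W where "W = G \<times> G"
  have finW: "finite W" unfolding W_def using finG by simp
  define c where "c = (\<lambda>(x,y). \<gamma> x y)"
  define r where "r = (\<lambda>(x,y). norm (x - y :: real \<times> real))"
  define S where "S = (\<lambda>(x,y) a. \<bar>gs \<sigma> (a - x) - gs \<sigma> (a - y)\<bar>)"
  have c0: "\<And>w. w \<in> W \<Longrightarrow> c w \<ge> 0" unfolding W_def c_def using g0 by auto
  have csum: "(\<Sum>w\<in>W. c w) = 1"
  proof -
    have "(\<Sum>w\<in>W. c w) = (\<Sum>x\<in>G. \<Sum>y\<in>G. \<gamma> x y)"
      unfolding W_def c_def by (simp add: sum.cartesian_product)
    also have "\<dots> = (\<Sum>x\<in>G. p x)" using gp by simp
    also have "\<dots> = 1" using pd unfolding is_distr_def G_def by simp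
    finally show ?thesis .
  qed
  have diff: "Htilde \<Delta> \<sigma> p a - Htilde \<Delta> \<sigma> q a
      = (1/Z) * (\<Sum>w\<in>W. c w * (gs \<sigma> (a - fst w) - gs \<sigma> (a - snd w)))" for a
  proof -
    have hp: "Htilde \<Delta> \<sigma> p a = (1/Z) * (\<Sum>x\<in>G. gs \<sigma> (a - x) * p x)"
      unfolding Htilde_def gZ G_def gs_def by (simp add: sum_distrib_left mult.assoc)
    have hq: "Htilde \<Delta> \<sigma> q a = (1/Z) * (\<Sum>y\<in>G. gs \<sigma> (a - y) * q y)"
      unfolding Htilde_def gZ G_def gs_def by (simp add: sum_distrib_left mult.assoc)
    have e1: "(\<Sum>x\<in>G. gs \<sigma> (a - x) * p x) = (\<Sum>x\<in>G. \<Sum>y\<in>G. \<gamma> x y * gs \<sigma> (a - x))"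
    proof (rule sum.cong[OF refl])
      fix x assume "x \<in> G"
      thus "gs \<sigma> (a - x) * p x = (\<Sum>y\<in>G. \<gamma> x y * gs \<sigma> (a - x))"
        using gp[of x] by (simp add: sum_distrib_right[symmetric] mult.commute)
    qed
    have e2: "(\<Sum>y\<in>G. gs \<sigma> (a - y) * q y) = (\<Sum>x\<in>G. \<Sum>y\<in>G. \<gamma> x y * gs \<sigma> (a - y))"
    proof -
      have "(\<Sum>y\<in>G. gs \<sigma> (a - y) * q y) = (\<Sum>y\<in>G. \<Sum>x\<in>G. \<gamma> x y * gs \<sigma> (a - y))"
      proof (rule sum.cong[OF refl])
        fix y assume "y \<in> G"
        thus "gs \<sigma> (a - y) * q y = (\<Sum>x\<in>G. \<gamma> x y * gs \<sigma> (a - y))"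
          using gq[of y] by (simp add: sum_distrib_right[symmetric] mult.commute)
      qed
      also have "\<dots> = (\<Sum>x\<in>G. \<Sum>y\<in>G. \<gamma> x y * gs \<sigma> (a - y))" by (rule sum.swap)
      finally show ?thesis .
    qed
    have "(\<Sum>w\<in>W. c w * (gs \<sigma> (a - fst w) - gs \<sigma> (a - snd w)))
        = (\<Sum>x\<in>G. \<Sum>y\<in>G. \<gamma> x y * gs \<sigma> (a - x)) - (\<Sum>x\<in>G. \<Sum>y\<in>G. \<gamma> x y * gs \<sigma> (a - y))"
      unfolding W_def c_def
      by (simp add: sum.cartesian_product case_prod_beta right_diff_distrib sum_subtractf)
    thus ?thesis unfolding hp hq e1 e2 by (simp add: right_diff_distrib)
  qed
  define B where "B = (\<lambda>a. (1/Z) * (\<Sum>w\<in>W. c w * S w a))"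
  have Sw: "w \<in> W \<Longrightarrow> S w summable_on L \<and> infsum (S w) L \<le> Z * r w / \<sigma>" for w
  proof -
    assume "w \<in> W"
    obtain x y where w0: "w = (x,y)" by (cases w)
    have w: "w = (x,y)" "x \<in> L" "y \<in> L" using w0 \<open>w \<in> W\<close> GL unfolding W_def by auto
    show ?thesis unfolding w S_def r_def Z_def L_def
      using pair_summable[OF s D] pair_bound[OF s D] w(2,3) unfolding L_def by auto
  qed
  have hB: "(B has_sum ((1/Z) * (\<Sum>w\<in>W. c w * infsum (S w) L))) L"
    unfolding B_def
    by (intro has_sum_cmult_right fin_sum_has_sum finW) (use Sw in \<open>auto simp: has_sum_iff\<close>)
  have absle: "\<bar>Htilde \<Delta> \<sigma> p a - Htilde \<Delta> \<sigma> q a\<bar> \<le> B a" for a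
  proof -
    have "\<bar>\<Sum>w\<in>W. c w * (gs \<sigma> (a - fst w) - gs \<sigma> (a - snd w))\<bar>
        \<le> (\<Sum>w\<in>W. \<bar>c w * (gs \<sigma> (a - fst w) - gs \<sigma> (a - snd w))\<bar>)" by (rule sum_abs)
    also have "\<dots> = (\<Sum>w\<in>W. c w * S w a)"
      using c0 by (intro sum.cong) (auto simp: S_def abs_mult split: prod.splits)
    finally show ?thesis unfolding diff B_def using Z1 by (simp add: abs_mult divide_right_mono)
  qed
  have sB: "B summable_on L" using hB summable_on_def by blast
  have iB: "infsum B L = (1/Z) * (\<Sum>w\<in>W. c w * infsum (S w) L)" using hB has_sum_iff by blast
  have sabs: "(\<lambda>a. \<bar>Htilde \<Delta> \<sigma> p a - Htilde \<Delta> \<sigma> q a\<bar>) summable_on L"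
    by (rule summable_on_comparison_test[OF sB absle abs_ge_zero])
  have "infsum (\<lambda>a. \<bar>Htilde \<Delta> \<sigma> p a - Htilde \<Delta> \<sigma> q a\<bar>) L \<le> infsum B L"
    by (rule infsum_mono[OF sabs sB absle])
  also have "\<dots> = (1/Z) * (\<Sum>w\<in>W. c w * infsum (S w) L)" by (rule iB)
  also have "\<dots> \<le> (1/Z) * (\<Sum>w\<in>W. c w * (Z * r w / \<sigma>))"
  proof -
    have "(\<Sum>w\<in>W. c w * infsum (S w) L) \<le> (\<Sum>w\<in>W. c w * (Z * r w / \<sigma>))"
    proof (rule sum_mono)
      fix w assume w: "w \<in> W"
      show "c w * infsum (S w) L \<le> c w * (Z * r w / \<sigma>)"
        by (rule mult_left_mono[OF conjunct2[OF Sw[OF w]] c0[OF w]])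
    qed
    moreover have "0 \<le> 1/Z" using Z1 by simp
    ultimately show ?thesis by (rule mult_left_mono)
  qed
  also have "\<dots> = (\<Sum>w\<in>W. c w * r w) / \<sigma>"
    using Z1 by (simp add: sum_divide_distrib sum_distrib_left)
  finally have tvb: "infsum (\<lambda>a. \<bar>Htilde \<Delta> \<sigma> p a - Htilde \<Delta> \<sigma> q a\<bar>) L \<le> (\<Sum>w\<in>W. c w * r w) / \<sigma>" .
  define M where "M = (\<Sum>w\<in>W. c w * r w)"
  have TV0: "TV \<Delta> (Htilde \<Delta> \<sigma> p) (Htilde \<Delta> \<sigma> q) \<ge> 0"
    unfolding TV_def by (simp add: infsum_nonneg)
  have "2 * \<sigma> * TV \<Delta> (Htilde \<Delta> \<sigma> p) (Htilde \<Delta> \<sigma> q) = \<sigma> * infsum (\<lambda>a. \<bar>Htilde \<Delta> \<sigma> p a - Htilde \<Delta> \<sigma> q a\<bar>) L"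
    unfolding TV_def L_def by simp
  also have "\<dots> \<le> \<sigma> * (M / \<sigma>)" using tvb s unfolding M_def by (intro mult_left_mono) auto
  also have "\<dots> = M" using s by simp
  finally have tvM: "2 * \<sigma> * TV \<Delta> (Htilde \<Delta> \<sigma> p) (Htilde \<Delta> \<sigma> q) \<le> M" .
  have "M\<^sup>2 = (\<Sum>w\<in>W. sqrt (c w) * (sqrt (c w) * r w))\<^sup>2"
    unfolding M_def using c0 by (intro arg_cong[where f = "\<lambda>z. z\<^sup>2"] sum.cong) (auto simp flip: mult.assoc)
  also have "\<dots> \<le> (\<Sum>w\<in>W. (sqrt (c w))\<^sup>2) * (\<Sum>w\<in>W. (sqrt (c w) * r w)\<^sup>2)"
    by (rule Cauchy_Schwarz_ineq_sum)
  also have "\<dots> = (\<Sum>w\<in>W. c w * (r w)\<^sup>2)"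
    using c0 csum by (simp add: power_mult_distrib)
  also have "\<dots> \<le> (\<Sum>w\<in>W. c w * l1dist (fst w) (snd w))"
    using c0 sq_le_l1 unfolding W_def G_def r_def
    by (intro sum_mono mult_left_mono) (auto split: prod.splits)
  also have "\<dots> = (\<Sum>x\<in>grid \<Delta>. \<Sum>y\<in>grid \<Delta>. \<gamma> x y * l1dist x y)"
    unfolding W_def c_def G_def by (simp add: sum.cartesian_product case_prod_beta)
  finally have "M\<^sup>2 \<le> (\<Sum>x\<in>grid \<Delta>. \<Sum>y\<in>grid \<Delta>. \<gamma> x y * l1dist x y)" .
  moreover have "(2 * \<sigma> * TV \<Delta> (Htilde \<Delta> \<sigma> p) (Htilde \<Delta> \<sigma> q))\<^sup>2 \<le> M\<^sup>2"
    using tvM TV0 s by (intro power_mono) auto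
  ultimately show ?thesis by linarith
qed

theorem lemma10:
  fixes \<Delta> :: nat and \<sigma> :: real and p q :: "real \<times> real \<Rightarrow> real"
  assumes "\<Delta> > 0" and "\<sigma> > 0"
    and "is_distr \<Delta> p" and "is_distr \<Delta> q"
  shows "TV \<Delta> (Htilde \<Delta> \<sigma> p) (Htilde \<Delta> \<sigma> q) \<le> sqrt (EMD \<Delta> p q) / (2 * \<sigma>)"
proof -
  define C where "C = {(\<Sum>x\<in>grid \<Delta>. \<Sum>y\<in>grid \<Delta>. \<gamma> x y * l1dist x y) | \<gamma>. is_coupling \<Delta> p q \<gamma>}"
  have p0: "\<And>x. x \<in> grid \<Delta> \<Longrightarrow> p x \<ge> 0" and p1: "(\<Sum>x\<in>grid \<Delta>. p x) = 1"
    using assms(3) unfolding is_distr_def by auto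
  have q0: "\<And>x. x \<in> grid \<Delta> \<Longrightarrow> q x \<ge> 0" and q1: "(\<Sum>x\<in>grid \<Delta>. q x) = 1"
    using assms(4) unfolding is_distr_def by auto
  have "is_coupling \<Delta> p q (\<lambda>x y. p x * q y)"
    unfolding is_coupling_def using p0 q0 p1 q1
    by (simp add: sum_distrib_left[symmetric] sum_distrib_right[symmetric])
  hence ne: "C \<noteq> {}" unfolding C_def by blast
  have "(2 * \<sigma> * TV \<Delta> (Htilde \<Delta> \<sigma> p) (Htilde \<Delta> \<sigma> q))\<^sup>2 \<le> Inf C"
  proof (rule cInf_greatest[OF ne])
    fix c assume "c \<in> C"
    then obtain \<gamma> where "is_coupling \<Delta> p q \<gamma>" and c: "c = (\<Sum>x\<in>grid \<Delta>. \<Sum>y\<in>grid \<Delta>. \<gamma> x y * l1dist x y)"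
      unfolding C_def by blast
    thus "(2 * \<sigma> * TV \<Delta> (Htilde \<Delta> \<sigma> p) (Htilde \<Delta> \<sigma> q))\<^sup>2 \<le> c"
      using coupling_bound[OF assms(1,2) _ assms(3)] by blast
  qed
  hence "2 * \<sigma> * TV \<Delta> (Htilde \<Delta> \<sigma> p) (Htilde \<Delta> \<sigma> q) \<le> sqrt (EMD \<Delta> p q)"
    unfolding EMD_def C_def by (rule real_le_rsqrt)
  thus ?thesis using assms(2) by (simp add: pos_le_divide_eq mult.commute mult.left_commute)
qed

end
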